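(* Let $p\ge3$, $n\ge1$, and real $a,b,e$ with $e>-p/2-n/2-1$, $-p/2-1<a<n/2+e$ and $-1<b<\min(n/2+e-a-1,0)$. For $w>0$ define $$\phi(w)=w\,\frac{\int_0^1\lambda^{p/2+a+1}(1-\lambda)^b(1+w\lambda)^{-p/2-n/2-e-2}\,d\lambda}{\int_0^1\lambda^{p/2+a}(1-\lambda)^b(1+w\lambda)^{-p/2-n/2-e-2}\,d\lambda}.$$ Then for all $w>0$ $$w\frac{\phi'(w)}{\phi(w)}\ge\frac{(p/2+a+2)\,b}{b+1}.$$ *)

theory Defs
  imports "HOL-Analysis.Analysis"
begin

definition phi_fun :: "nat \<Rightarrow> nat \<Rightarrow> real \<Rightarrow> real \<Rightarrow> real \<Rightarrow> real \<Rightarrow> real" where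
  "phi_fun p n a b e w =
     w * (LINT l:{0..1}|lborel. l powr (real p / 2 + a + 1) * (1 - l) powr b
             * (1 + w * l) powr (- real p / 2 - real n / 2 - e - 2))
       / (LINT l:{0..1}|lborel. l powr (real p / 2 + a) * (1 - l) powr b
             * (1 + w * l) powr (- real p / 2 - real n / 2 - e - 2))"

end

theory Submission
  imports Defs
begin

lemma negl01: "negligible {x::real. x = 0 \<or> x = 1}"
proof -
  have "{x::real. x = 0 \<or> x = 1} = {0,1}" by auto
  then show ?thesis by (simp add: negligible_finite)
qed

lemma integrable_open_to_closed01:
  fixes f :: "real \<Rightarrow> real"
  assumes "f integrable_on {0<..<1}"
  shows "f integrable_on {0..1}"
proof (rule integrable_spike_set[OF assms])
  have "{x \<in> {0<..<1} - {0..1}. f x \<noteq> 0} = {}" by auto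
  then show "negligible {x \<in> {0<..<1} - {0..1}. f x \<noteq> 0}" by (metis negligible_empty)
  show "negligible {x \<in> {0..1} - {0<..<1}. f x \<noteq> 0}"
    by (rule negligible_subset[OF negl01]) auto
qed

lemma integrable_closed_to_open01:
  fixes f :: "real \<Rightarrow> real"
  assumes "f integrable_on {0..1}"
  shows "f integrable_on {0<..<1}"
proof (rule integrable_spike_set[OF assms])
  show "negligible {x \<in> {0..1} - {0<..<1}. f x \<noteq> 0}"
    by (rule negligible_subset[OF negl01]) auto
  have "{x \<in> {0<..<1} - {0..1}. f x \<noteq> 0} = {}" by auto
  then show "negligible {x \<in> {0<..<1} - {0..1}. f x \<noteq> 0}" by (metis negligible_empty)
qed

lemma has_integral_1ml_powr:
  fixes b :: real
  assumes b: "b > -1"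
  shows "((\<lambda>l. (1 - l) powr b) has_integral (1 / (b+1))) {0..1}"
proof -
  let ?F = "\<lambda>l::real. (-1/(b+1)) * (1 - l) powr (b+1)"
  have "((\<lambda>l. (1 - l) powr b) has_integral (?F 1 - ?F 0)) {0..1}"
  proof (rule fundamental_theorem_of_calculus_interior)
    show "0 \<le> (1::real)" by simp
    show "continuous_on {0..1} ?F"
      using b by (intro continuous_intros continuous_on_powr') auto
    fix x :: real assume x: "x \<in> {0<..<1}"
    have "((\<lambda>l. (1 - l) powr (b+1)) has_real_derivative ((b+1) * (1 - x) powr (b+1 - of_nat 1) * (-1))) (at x)"
      using x by (intro DERIV_fun_powr) (auto intro!: derivative_eq_intros)
    then have "(?F has_real_derivative ((-1/(b+1)) * ((b+1) * (1 - x) powr (b+1 - of_nat 1) * (-1)))) (at x)"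
      by (rule DERIV_cmult)
    then have "(?F has_real_derivative ((1 - x) powr b)) (at x)"
      by (rule DERIV_cong) (use b in \<open>simp add: field_simps\<close>)
    then show "(?F has_vector_derivative (1 - x) powr b) (at x)"
      by (simp add: has_real_derivative_iff_has_vector_derivative)
  qed
  moreover have "?F 1 - ?F 0 = 1 / (b+1)" using b by simp
  ultimately show ?thesis by simp
qed


lemma powr_prod_bound:
  fixes c b l :: real
  assumes c: "c > -1" and b: "b \<le> 0" and l: "0 < l" "l < 1"
  shows "l powr c * (1 - l) powr b \<le> ((1/2) powr b + (1/2) powr c + 1) * (l powr c + (1 - l) powr b)"
proof -
  let ?K = "(1/2::real) powr b + (1/2) powr c + 1"
  have pos1: "0 < l powr c" "0 < (1-l) powr b" using l by auto
  have K1: "(1/2::real) powr b \<le> ?K" "(1/2::real) powr c \<le> ?K" "1 \<le> ?K" by auto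
  show ?thesis
  proof (cases "l \<le> 1/2")
    case True
    have "(1 - l) powr b \<le> (1/2) powr b"
      using True b l by (intro powr_mono2') auto
    also have "\<dots> \<le> ?K" by (rule K1)
    finally have "l powr c * (1 - l) powr b \<le> l powr c * ?K"
      using pos1 by (intro mult_left_mono) auto
    also have "\<dots> \<le> ?K * (l powr c + (1 - l) powr b)"
      using pos1 K1 by (simp add: algebra_simps)
    finally show ?thesis .
  next
    case False
    have "l powr c \<le> ?K"
    proof (cases "c \<ge> 0")
      case True
      have "l powr c \<le> 1 powr c" using l True by (intro powr_mono2) auto
      then have "l powr c \<le> 1" by simp
      then show ?thesis using K1(3) by linarith
    next
      case False
      have "l powr c \<le> (1/2) powr c"
        using \<open>\<not> l \<le> 1/2\<close> False l by (intro powr_mono2') auto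
      then show ?thesis using K1 by linarith
    qed
    then have "l powr c * (1 - l) powr b \<le> ?K * (1 - l) powr b"
      using pos1 by (intro mult_right_mono) auto
    also have "\<dots> \<le> ?K * (l powr c + (1 - l) powr b)"
      using pos1 K1 by (simp add: algebra_simps)
    finally show ?thesis .
  qed
qed

lemma integrable_wbeta:
  fixes c b :: real and g :: "real \<Rightarrow> real"
  assumes c: "c > -1" and b: "b > -1" "b \<le> 0" and g: "continuous_on {0..1} g"
  shows "(\<lambda>l. l powr c * (1 - l) powr b * g l) integrable_on {0..1}"
proof -
  obtain G where G: "\<And>l. l \<in> {0..1} \<Longrightarrow> \<bar>g l\<bar> \<le> G"
    using compact_continuous_image[OF g compact_Icc] unfolding bounded_iff compact_eq_bounded_closed
    by (metis (no_types, lifting) image_eqI real_norm_def)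
  let ?K = "(1/2::real) powr b + (1/2) powr c + 1"
  let ?f = "\<lambda>l. l powr c * (1 - l) powr b * g l"
  let ?h = "\<lambda>l. G * ?K * (l powr c + (1 - l) powr b)"
  have hint: "?h integrable_on {0..1}"
  proof -
    have "(\<lambda>l. l powr c) integrable_on {0..1}" using integrable_on_powr_from_0[OF c, of 1] by simp
    moreover have "(\<lambda>l. (1 - l) powr b) integrable_on {0..1}"
      using has_integral_1ml_powr[OF b(1)] by blast
    ultimately have "(\<lambda>l. l powr c + (1 - l) powr b) integrable_on {0..1}" by (rule integrable_add)
    from integrable_on_cmult_left[OF this, of "G * ?K"] show ?thesis by simp
  qed
  have "?f absolutely_integrable_on {0<..<1}"
  proof (rule measurable_bounded_by_integrable_imp_absolutely_integrable)
    show "?f \<in> borel_measurable (lebesgue_on {0<..<1})"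
      by (rule continuous_imp_measurable_on_sets_lebesgue)
        (auto intro!: continuous_intros continuous_on_subset[OF g])
    show "{0<..<1::real} \<in> sets lebesgue" by simp
    show "?h integrable_on {0<..<1}" by (rule integrable_closed_to_open01[OF hint])
    fix l :: real assume l: "l \<in> {0<..<1}"
    have "norm (?f l) = l powr c * (1 - l) powr b * \<bar>g l\<bar>"
      using l by (simp add: abs_mult)
    also have "\<dots> \<le> l powr c * (1 - l) powr b * G"
      using l G[of l] by (intro mult_left_mono) auto
    also have "\<dots> \<le> ?K * (l powr c + (1 - l) powr b) * G"
      using l powr_prod_bound[OF c b(2), of l] G[of l]
      by (intro mult_right_mono) auto
    finally show "norm (?f l) \<le> ?h l" by (simp add: algebra_simps)
  qed
  then have "?f integrable_on {0<..<1}" using set_lebesgue_integral_eq_integral(1) by blast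
  then show ?thesis by (rule integrable_open_to_closed01)
qed


lemma deriv_u:
  fixes g l t :: real
  assumes "0 \<le> l" "0 \<le> t"
  shows "((\<lambda>t. (1 + t*l) powr (-g)) has_real_derivative (-g * l * (1 + t*l) powr (-g-1))) (at t)"
proof -
  have pos: "1 + t*l > 0" using assms by (smt (verit) mult_nonneg_nonneg)
  have "((\<lambda>t. (1 + t*l) powr (-g)) has_real_derivative ((-g) * (1 + t*l) powr (-g - of_nat 1) * (0 + 1*l))) (at t)"
    by (intro DERIV_fun_powr pos derivative_eq_intros) auto
  then show ?thesis by (rule DERIV_cong) (simp add: algebra_simps)
qed

lemma deriv_u':
  fixes g l t :: real
  assumes "0 \<le> l" "0 \<le> t"
  shows "((\<lambda>t. -g * l * (1 + t*l) powr (-g-1)) has_real_derivative (g * (g+1) * l^2 * (1 + t*l) powr (-g-2))) (at t)"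
proof -
  have pos: "1 + t*l > 0" using assms by (smt (verit) mult_nonneg_nonneg)
  have "((\<lambda>t. (1 + t*l) powr (-g-1)) has_real_derivative ((-g-1) * (1 + t*l) powr (-g-1 - of_nat 1) * (0 + 1*l))) (at t)"
    by (intro DERIV_fun_powr pos derivative_eq_intros) auto
  then have "((\<lambda>t. (-g * l) * (1 + t*l) powr (-g-1)) has_real_derivative (-g*l) * ((-g-1) * (1 + t*l) powr (-g-1 - of_nat 1) * (0 + 1*l))) (at t)"
    by (rule DERIV_cmult)
  then show ?thesis
    by (rule DERIV_cong) (simp add: algebra_simps power2_eq_square)
qed

lemma taylor_u:
  fixes g l y w :: real
  assumes g: "g > 0" and l: "0 \<le> l" "l \<le> 1" and y: "0 \<le> y" and w: "0 \<le> w"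
  shows "\<bar>(1 + y*l) powr (-g) - (1 + w*l) powr (-g) - (y - w) * (-g * l * (1 + w*l) powr (-g-1))\<bar>
           \<le> g * (g+1) * (y - w)^2"
proof (cases "y = w")
  case True then show ?thesis by simp
next
  case False
  define diff where "diff = (\<lambda>m::nat. \<lambda>t::real. if m = 0 then (1 + t*l) powr (-g)
      else if m = 1 then -g * l * (1 + t*l) powr (-g-1) else g * (g+1) * l^2 * (1 + t*l) powr (-g-2))"
  have D: "\<forall>m t. m < 2 \<and> 0 \<le> t \<and> t \<le> y + w \<longrightarrow> DERIV (diff m) t :> diff (Suc m) t"
  proof (intro allI impI)
    fix m :: nat and t :: real assume h: "m < 2 \<and> 0 \<le> t \<and> t \<le> y + w"
    then have "m = 0 \<or> m = 1" by auto
    then show "DERIV (diff m) t :> diff (Suc m) t"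
    proof
      assume "m = 0"
      then show ?thesis using deriv_u[OF l(1), of t g] h by (simp add: diff_def)
    next
      assume "m = 1"
      then show ?thesis using deriv_u'[OF l(1), of t g] h by (simp add: diff_def)
    qed
  qed
  obtain t where t: "(if y < w then y < t \<and> t < w else w < t \<and> t < y)"
    and eq: "diff 0 y = (\<Sum>m<2. (diff m w / fact m) * (y - w)^m) + (diff 2 t / fact 2) * (y - w)^2"
    using Taylor[of 2 diff "diff 0" 0 "y+w" w y, OF _ _ D] False y w by auto
  have t0: "0 \<le> t" using t y w by (auto split: if_splits)
  have eq2: "(1 + y*l) powr (-g) - (1 + w*l) powr (-g) - (y - w) * (-g * l * (1 + w*l) powr (-g-1))
      = g * (g+1) * l^2 * (1 + t*l) powr (-g-2) / 2 * (y - w)^2"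
    using eq by (simp add: diff_def numeral_2_eq_2 algebra_simps)
  have b1: "(1 + t*l) powr (-g-2) \<le> 1"
  proof -
    have "(1 + t*l) powr (-g-2) \<le> (1 + t*l) powr 0"
      using g t0 l by (intro powr_mono) auto
    moreover have "1 + t*l \<noteq> 0" using t0 l by (smt (verit) mult_nonneg_nonneg)
    ultimately show ?thesis by simp
  qed
  have b0: "0 \<le> (1 + t*l) powr (-g-2)" by simp
  have l2: "l^2 \<le> 1" using l by (simp add: power_le_one)
  have "g * (g+1) * l^2 * (1 + t*l) powr (-g-2) \<le> g * (g+1) * 1 * 1"
    using g l2 b1 b0 by (intro mult_mono) auto
  moreover have "0 \<le> g * (g+1) * l^2 * (1 + t*l) powr (-g-2)" using g by simp
  ultimately have "g * (g+1) * l^2 * (1 + t*l) powr (-g-2) / 2 \<le> g * (g+1)" by linarith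
  then have "g * (g+1) * l^2 * (1 + t*l) powr (-g-2) / 2 * (y - w)^2 \<le> g * (g+1) * (y-w)^2"
    by (intro mult_right_mono) auto
  moreover have "0 \<le> g * (g+1) * l^2 * (1 + t*l) powr (-g-2) / 2 * (y - w)^2"
    using g by simp
  ultimately show ?thesis using eq2 by simp
qed


lemma one_plus_pos: "0 \<le> (y::real) \<Longrightarrow> 0 \<le> l \<Longrightarrow> 0 < 1 + y*l"
  by (smt (verit) mult_nonneg_nonneg)

lemma cont_hpow: "0 \<le> (y::real) \<Longrightarrow> continuous_on {0..1} (\<lambda>l. (1 + y*l) powr d)"
  by (intro continuous_intros continuous_on_powr') (auto dest: one_plus_pos[of y])

lemma deriv_M:
  fixes c b g w :: real
  assumes c: "c > -1" and b: "b > -1" "b \<le> 0" and g: "g > 0" and w: "w > 0"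
  shows "((\<lambda>y. integral {0..1} (\<lambda>l. l powr c * (1-l) powr b * (1+y*l) powr (-g))) has_real_derivative
          integral {0..1} (\<lambda>l. l powr c * (1-l) powr b * (-g * l * (1+w*l) powr (-g-1)))) (at w)"
proof -
  define F where "F = (\<lambda>y. integral {0..1} (\<lambda>l. l powr c * (1-l) powr b * (1+y*l) powr (-g)))"
  define D where "D = integral {0..1} (\<lambda>l. l powr c * (1-l) powr b * (-g * l * (1+w*l) powr (-g-1)))"
  define S0 where "S0 = integral {0..1} (\<lambda>l. l powr c * (1-l) powr b * 1)"
  define C where "C = g * (g+1)"
  have intu: "(\<lambda>l. l powr c * (1-l) powr b * (1+y*l) powr (-g)) integrable_on {0..1}" if "y \<ge> 0" for y
    by (rule integrable_wbeta[OF c b cont_hpow[OF that]])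
  have intd: "(\<lambda>l. l powr c * (1-l) powr b * (-g * l * (1+w*l) powr (-g-1))) integrable_on {0..1}"
    by (rule integrable_wbeta[OF c b]) (intro continuous_intros cont_hpow, use w in auto)
  have ints: "(\<lambda>l. l powr c * (1-l) powr b * 1) integrable_on {0..1}"
    by (rule integrable_wbeta[OF c b]) (intro continuous_intros)
  have key: "\<bar>F y - F w - (y - w) * D\<bar> \<le> C * S0 * (y - w)^2" if y: "y \<ge> 0" for y
  proof -
    let ?R = "\<lambda>l. l powr c * (1-l) powr b * ((1+y*l) powr (-g) - (1+w*l) powr (-g) - (y - w) * (-g * l * (1+w*l) powr (-g-1)))"
    have "((\<lambda>l. l powr c * (1-l) powr b * (1+y*l) powr (-g) - l powr c * (1-l) powr b * (1+w*l) powr (-g)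
             - (y - w) * (l powr c * (1-l) powr b * (-g * l * (1+w*l) powr (-g-1)))) has_integral (F y - F w - (y - w) * D)) {0..1}"
      unfolding F_def D_def
      by (intro has_integral_diff has_integral_mult_right integrable_integral intu intd y) (use w in auto)
    then have hR: "(?R has_integral (F y - F w - (y - w) * D)) {0..1}"
      by (rule has_integral_eq[rotated]) (simp add: algebra_simps)
    have "norm (integral {0..1} ?R) \<le> integral {0..1} (\<lambda>l. (l powr c * (1-l) powr b * 1) * (C * (y-w)^2))"
    proof (rule integral_norm_bound_integral)
      show "?R integrable_on {0..1}" using hR by blast
      show "(\<lambda>l. (l powr c * (1-l) powr b * 1) * (C * (y-w)^2)) integrable_on {0..1}"
        by (rule integrable_on_mult_left[OF ints])
      fix l :: real assume l: "l \<in> {0..1}"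
      have "norm (?R l) = l powr c * (1-l) powr b * \<bar>(1+y*l) powr (-g) - (1+w*l) powr (-g) - (y - w) * (-g * l * (1+w*l) powr (-g-1))\<bar>"
        by (simp add: abs_mult)
      also have "\<dots> \<le> l powr c * (1-l) powr b * (C * (y - w)^2)"
        unfolding C_def using l taylor_u[OF g, of l y w] y w by (intro mult_left_mono) auto
      finally show "norm (?R l) \<le> (l powr c * (1-l) powr b * 1) * (C * (y-w)^2)" by simp
    qed
    also have "\<dots> = S0 * (C * (y-w)^2)"
      unfolding S0_def by (rule integral_mult_left)
    finally show ?thesis using integral_unique[OF hR] by (simp add: algebra_simps)
  qed
  have "((\<lambda>y. (F y - F w) / (y - w) - D) \<longlongrightarrow> 0) (at w)"
  proof (rule Lim_null_comparison)
    show "\<forall>\<^sub>F y in at w. norm ((F y - F w) / (y - w) - D) \<le> C * S0 * \<bar>y - w\<bar>"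
    proof -
      have "\<forall>\<^sub>F y in at w. y \<noteq> w \<and> dist y w < w"
        using w by (auto simp: eventually_at intro: exI[of _ w])
      then show ?thesis
      proof (rule eventually_mono)
        fix y assume y: "y \<noteq> w \<and> dist y w < w"
        then have y0: "y \<ge> 0" by (auto simp: dist_real_def)
        have ne: "y - w \<noteq> 0" using y by simp
        have "(F y - F w) / (y - w) - D = (F y - F w - (y - w) * D) / (y - w)"
          using ne by (simp add: field_simps)
        then have "norm ((F y - F w) / (y - w) - D) = \<bar>F y - F w - (y - w) * D\<bar> / \<bar>y - w\<bar>"
          by (simp add: abs_divide)
        also have "\<dots> \<le> C * S0 * (y - w)^2 / \<bar>y - w\<bar>"
          using key[OF y0] by (intro divide_right_mono) auto
        also have "\<dots> = C * S0 * \<bar>y - w\<bar>"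
        proof -
          have "(y - w)^2 / \<bar>y - w\<bar> = \<bar>y - w\<bar>"
            using ne by (cases "y > w") (auto simp: power2_eq_square field_simps)
          then show ?thesis by (metis times_divide_eq_right)
        qed
        finally show "norm ((F y - F w) / (y - w) - D) \<le> C * S0 * \<bar>y - w\<bar>" .
      qed
    qed
    have "((\<lambda>y. C * S0 * \<bar>y - w\<bar>) \<longlongrightarrow> C * S0 * \<bar>w - w\<bar>) (at w)"
      by (intro tendsto_intros)
    then show "((\<lambda>y. C * S0 * \<bar>y - w\<bar>) \<longlongrightarrow> 0) (at w)" by simp
  qed
  then have "((\<lambda>y. (F y - F w) / (y - w)) \<longlongrightarrow> D) (at w)"
    by (simp add: LIM_zero_iff)
  then show ?thesis unfolding F_def D_def by (simp add: has_field_derivative_iff)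
qed


lemma powr_succ: "0 \<le> (l::real) \<Longrightarrow> l powr (c+1) = l powr c * l"
  by (simp add: powr_add)

lemma powr_succ2: "0 \<le> (l::real) \<Longrightarrow> l powr (c+2) = l powr c * l * l"
  by (simp add: powr_add powr_numeral power2_eq_square)

lemma powr_succ_1m: "(l::real) \<le> 1 \<Longrightarrow> (1 - l) powr (b+1) = (1 - l) powr b * (1 - l)"
  by (simp add: powr_succ)

lemma deriv_powr_pos: "0 < (x::real) \<Longrightarrow> ((\<lambda>x. x powr r) has_real_derivative r * x powr (r - 1)) (at x)"
  by (rule has_real_derivative_powr)

lemma deriv_1m_powr: "(x::real) < 1 \<Longrightarrow> ((\<lambda>x. (1 - x) powr r) has_real_derivative - r * (1 - x) powr (r - 1)) (at x)"
proof -
  assume x: "x < 1"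
  have "((\<lambda>x. (1 - x) powr r) has_real_derivative r * (1 - x) powr (r - of_nat 1) * (0 - 1)) (at x)"
    using x by (intro DERIV_fun_powr derivative_eq_intros) auto
  then show ?thesis by (rule DERIV_cong) simp
qed

lemma deriv_h: "0 \<le> (w::real) \<Longrightarrow> 0 \<le> x \<Longrightarrow> ((\<lambda>x. (1 + w*x) powr d) has_real_derivative d * w * (1 + w*x) powr (d - 1)) (at x)"
proof -
  assume w: "0 \<le> w" and x: "0 \<le> x"
  have pos: "0 < 1 + w*x" using one_plus_pos[OF w x] .
  have "((\<lambda>x. (1 + w*x) powr d) has_real_derivative d * (1 + w*x) powr (d - of_nat 1) * (0 + w*1)) (at x)"
    using pos by (intro DERIV_fun_powr derivative_eq_intros) auto
  then show ?thesis by (rule DERIV_cong) (simp add: algebra_simps)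
qed

lemma ident:
  fixes al b g w :: real
  assumes al: "al > -1" and b: "b > -1" "b \<le> 0" and g: "g > 0" and w: "w > 0"
  shows "g * w * integral {0..1} (\<lambda>l. l powr (al+1) * (1-l) powr b * (1+w*l) powr (-g-1))
       = (al+1) * integral {0..1} (\<lambda>l. l powr al * (1-l) powr b * (1+w*l) powr (-g))
         - (al+b+2) * integral {0..1} (\<lambda>l. l powr (al+1) * (1-l) powr b * (1+w*l) powr (-g))
         + g * w * integral {0..1} (\<lambda>l. l powr (al+2) * (1-l) powr b * (1+w*l) powr (-g-1))"
proof -
  define P0 where "P0 = (\<lambda>l::real. l powr al * (1-l) powr b * (1+w*l) powr (-g))"
  define P1 where "P1 = (\<lambda>l::real. l powr (al+1) * (1-l) powr b * (1+w*l) powr (-g))"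
  define Q1 where "Q1 = (\<lambda>l::real. l powr (al+1) * (1-l) powr b * (1+w*l) powr (-g-1))"
  define Q2 where "Q2 = (\<lambda>l::real. l powr (al+2) * (1-l) powr b * (1+w*l) powr (-g-1))"
  define F where "F = (\<lambda>l::real. l powr (al+1) * (1-l) powr (b+1) * (1+w*l) powr (-g))"
  define f' where "f' = (\<lambda>l. (al+1) * (P0 l - P1 l) - (b+1) * P1 l - g * w * (Q1 l - Q2 l))"
  have iP0: "P0 integrable_on {0..1}" unfolding P0_def
    by (rule integrable_wbeta) (use al b w in \<open>auto intro: cont_hpow\<close>)
  have iP1: "P1 integrable_on {0..1}" unfolding P1_def
    by (rule integrable_wbeta) (use al b w in \<open>auto intro: cont_hpow\<close>)
  have iQ1: "Q1 integrable_on {0..1}" unfolding Q1_def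
    by (rule integrable_wbeta) (use al b w in \<open>auto intro: cont_hpow\<close>)
  have iQ2: "Q2 integrable_on {0..1}" unfolding Q2_def
    by (rule integrable_wbeta) (use al b w in \<open>auto intro: cont_hpow\<close>)
  have "(f' has_integral (F 1 - F 0)) {0..1}"
  proof (rule fundamental_theorem_of_calculus_interior)
    show "0 \<le> (1::real)" by simp
    show "continuous_on {0..1} F" unfolding F_def
      using al b w by (intro continuous_intros continuous_on_powr' cont_hpow) auto
    fix x :: real assume x: "x \<in> {0<..<1}"
    then have x0: "0 < x" and x1: "x < 1" by auto
    have dA: "((\<lambda>x. x powr (al+1)) has_real_derivative (al+1) * x powr (al+1-1)) (at x)"
      using x0 by (rule deriv_powr_pos)
    have dB: "((\<lambda>x. (1-x) powr (b+1)) has_real_derivative - (b+1) * (1-x) powr (b+1-1)) (at x)"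
      using x1 by (rule deriv_1m_powr)
    have dC: "((\<lambda>x. (1+w*x) powr (-g)) has_real_derivative (-g) * w * (1+w*x) powr (-g-1)) (at x)"
      using deriv_h[of w x "-g"] w x0 by simp
    have e1: "x powr (al+1) = x powr al * x" using x0 by (simp add: powr_succ)
    have e2: "x powr (al+2) = x powr al * x * x" using x0 by (simp add: powr_succ2)
    have e3: "(1-x) powr (b+1) = (1-x) powr b * (1-x)" using x1 by (simp add: powr_succ_1m)
    have "(F has_real_derivative f' x) (at x)"
      unfolding F_def
      by (rule DERIV_cong[OF DERIV_mult[OF DERIV_mult[OF dA dB] dC]])
        (simp only: f'_def P0_def P1_def Q1_def Q2_def e1 e2 e3, simp add: algebra_simps)
    then show "(F has_vector_derivative f' x) (at x)"
      by (simp add: has_real_derivative_iff_has_vector_derivative)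
  qed
  moreover have "F 1 - F 0 = 0" unfolding F_def using b by simp
  ultimately have h1: "(f' has_integral 0) {0..1}" by simp
  have h2: "(f' has_integral ((al+1) * (integral {0..1} P0 - integral {0..1} P1) - (b+1) * integral {0..1} P1
              - g * w * (integral {0..1} Q1 - integral {0..1} Q2))) {0..1}"
    unfolding f'_def
    by (intro has_integral_diff has_integral_mult_right integrable_integral iP0 iP1 iQ1 iQ2)
  from has_integral_unique[OF h1 h2] show ?thesis
    unfolding P0_def[symmetric] P1_def[symmetric] Q1_def[symmetric] Q2_def[symmetric]
    by (simp add: algebra_simps)
qed


lemma indef_deriv:
  fixes f :: "real \<Rightarrow> real"
  assumes f: "f integrable_on {0..1}" and c: "continuous_on {0<..<1} f" and x: "x \<in> {0<..<1}"
  shows "((\<lambda>u. integral {0..u} f) has_real_derivative f x) (at x)"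
proof -
  have "isCont f x" using c x continuous_on_eq_continuous_at[of "{0<..<1}" f] by auto
  then have "continuous (at x within ({0..1} - {})) f" by (simp add: continuous_at_imp_continuous_at_within)
  from integral_has_vector_derivative_continuous_at[OF f _ _ this] x
  have "((\<lambda>u. integral {0..u} f) has_vector_derivative f x) (at x within {0..1})" by auto
  moreover have "at x within {0..1} = at x"
    using x by (intro at_within_interior) (simp add: interior_atLeastAtMost_real)
  ultimately show ?thesis by (simp add: has_real_derivative_iff_has_vector_derivative)
qed

lemma cont_om_open:
  fixes c b :: real
  shows "continuous_on {0<..<1} (\<lambda>l. l powr c * (1-l) powr b)"
  by (intro continuous_intros continuous_on_powr') auto

lemma cont_om_closed:
  fixes c b t :: real
  assumes "c > 0" "t < 1"
  shows "continuous_on {0..t} (\<lambda>l. l powr c * (1-l) powr b)"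
  using assms by (intro continuous_intros continuous_on_powr') auto

lemma MVT_known:
  fixes f f' :: "real \<Rightarrow> real"
  assumes "a < b" "continuous_on {a..b} f" "\<And>x. a < x \<Longrightarrow> x < b \<Longrightarrow> DERIV f x :> f' x"
  shows "\<exists>z. a < z \<and> z < b \<and> f b - f a = (b - a) * f' z"
proof -
  have "\<And>x. a < x \<Longrightarrow> x < b \<Longrightarrow> f differentiable (at x)"
    using assms(3) real_differentiable_def by blast
  from MVT[OF assms(1,2) this] obtain l z where z: "a < z" "z < b" "DERIV f z :> l" "f b - f a = (b - a) * l"
    by blast
  have "l = f' z" using DERIV_unique[OF z(3) assms(3)[OF z(1,2)]] .
  then show ?thesis using z by blast
qed

lemma main_lemma:
  fixes al b g w :: real
  assumes al: "al > -1" and b: "b > -1" "b < 0" and g: "g > 0" and w: "w > 0"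
  shows "g * w * integral {0..1} (\<lambda>l. l powr (al+2) * (1-l) powr b * (1+w*l) powr (-g-1))
       \<le> ((al+2)/(b+1)) * integral {0..1} (\<lambda>l. l powr (al+1) * (1-l) powr b * (1+w*l) powr (-g))"
proof -
  define k where "k = (al+2)/(b+1)"
  define om where "om = (\<lambda>l::real. l powr (al+1) * (1-l) powr b)"
  define om2 where "om2 = (\<lambda>l::real. l powr (al+2) * (1-l) powr b)"
  define V where "V = (\<lambda>t. integral {0..t} om)"
  define U where "U = (\<lambda>t. integral {0..t} om2)"
  define Phi where "Phi = (\<lambda>t. k * t * V t - (k+1) * U t)"
  define psi where "psi = (\<lambda>t. k * V t - om2 t)"
  define h where "h = (\<lambda>l::real. (1+w*l) powr (-g))"
  define h1 where "h1 = (\<lambda>l::real. -g * w * (1+w*l) powr (-g-1))"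
  define h2 where "h2 = (\<lambda>l::real. g * (g+1) * w^2 * (1+w*l) powr (-g-2))"
  have b1: "b \<le> 0" using b by simp
  have k_ge: "k \<ge> al + 2"
  proof -
    have "(al+2) * 1 \<le> (al+2) * (1/(b+1))"
      using al b by (intro mult_left_mono) (auto simp: field_simps)
    then show ?thesis unfolding k_def by simp
  qed
  have iom: "om integrable_on {0..1}" unfolding om_def
    using integrable_wbeta[OF _ b(1) b1 continuous_on_const, of "al+1" 1] al by simp
  have iom2: "om2 integrable_on {0..1}" unfolding om2_def
    using integrable_wbeta[OF _ b(1) b1 continuous_on_const, of "al+2" 1] al by simp
  have cV: "continuous_on {0..1} V" unfolding V_def by (rule indefinite_integral_continuous_1[OF iom])
  have cU: "continuous_on {0..1} U" unfolding U_def by (rule indefinite_integral_continuous_1[OF iom2])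
  have dV: "(V has_real_derivative om x) (at x)" if "x \<in> {0<..<1}" for x
    unfolding V_def by (rule indef_deriv[OF iom _ that]) (unfold om_def, rule cont_om_open)
  have dU: "(U has_real_derivative om2 x) (at x)" if "x \<in> {0<..<1}" for x
    unfolding U_def by (rule indef_deriv[OF iom2 _ that]) (unfold om2_def, rule cont_om_open)
  have V0: "V 0 = 0" and U0: "U 0 = 0" unfolding V_def U_def by simp_all
  have V1: "V 1 \<ge> 0" unfolding V_def om_def
    by (rule integral_nonneg[OF iom[unfolded om_def]]) auto
  have Phi0: "Phi 0 = 0" unfolding Phi_def using U0 by simp
  have Phi1: "Phi 1 = 0"
  proof -
    define G where "G = (\<lambda>r::real. r powr (al+2) * (1-r) powr (b+1))"
    define g' where "g' = (\<lambda>r. (al+2) * (om r - om2 r) - (b+1) * om2 r)"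
    have "(g' has_integral (G 1 - G 0)) {0..1}"
    proof (rule fundamental_theorem_of_calculus_interior)
      show "0 \<le> (1::real)" by simp
      show "continuous_on {0..1} G" unfolding G_def
        using al b by (intro continuous_intros continuous_on_powr') auto
      fix x :: real assume x: "x \<in> {0<..<1}"
      then have x0: "0 < x" and x1: "x < 1" by auto
      have dA: "((\<lambda>x. x powr (al+2)) has_real_derivative (al+2) * x powr (al+2-1)) (at x)"
        using x0 by (rule deriv_powr_pos)
      have dB: "((\<lambda>x. (1-x) powr (b+1)) has_real_derivative - (b+1) * (1-x) powr (b+1-1)) (at x)"
        using x1 by (rule deriv_1m_powr)
      have e0: "al + 2 - 1 = al + 1" by simp
      have e1: "x powr (al+2) = x powr (al+1) * x" using x0 powr_succ[of x "al+1"] by (simp add: add.assoc)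
      have e3: "(1-x) powr (b+1) = (1-x) powr b * (1-x)" using x1 by (simp add: powr_succ_1m)
      have "(G has_real_derivative g' x) (at x)"
        unfolding G_def
        by (rule DERIV_cong[OF DERIV_mult[OF dA dB]])
          (simp only: g'_def om_def om2_def e0 e1 e3, simp add: algebra_simps)
      then show "(G has_vector_derivative g' x) (at x)"
        by (simp add: has_real_derivative_iff_has_vector_derivative)
    qed
    moreover have "G 1 - G 0 = 0" unfolding G_def using al b by simp
    ultimately have h1: "(g' has_integral 0) {0..1}" by simp
    have h2: "(g' has_integral ((al+2) * (V 1 - U 1) - (b+1) * U 1)) {0..1}"
      unfolding g'_def V_def U_def
      by (intro has_integral_diff has_integral_mult_right integrable_integral iom iom2)
    from has_integral_unique[OF h1 h2] have "(al+2) * V 1 = (al+b+3) * U 1" by (simp add: algebra_simps)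
    then show ?thesis unfolding Phi_def k_def using b by (simp add: field_simps)
  qed
  have cPhi: "continuous_on {0..1} Phi" unfolding Phi_def
    by (intro continuous_intros cV cU)
  have dPhi: "(Phi has_real_derivative psi x) (at x)" if x: "x \<in> {0<..<1}" for x
  proof -
    have e: "x powr (al+2) = x powr (al+1) * x" using x powr_succ[of x "al+1"] by (simp add: add.assoc)
    show ?thesis unfolding Phi_def
      by (rule DERIV_cong[OF DERIV_diff[OF DERIV_mult[OF DERIV_cmult[OF DERIV_ident] dV[OF x]] DERIV_cmult[OF dU[OF x]]]])
        (simp add: psi_def om_def om2_def e algebra_simps)
  qed
  define D where "D = (\<lambda>x. x powr (al+1) * (1-x) powr (b-1) * ((k-al-2)*(1-x) + b*x))"
  have cpsi: "continuous_on {0..t} psi" if "t < 1" for t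
  proof -
    have "continuous_on {0..t} V"
      by (rule continuous_on_subset[OF cV]) (use that in auto)
    moreover have "continuous_on {0..t} om2" unfolding om2_def
      by (rule cont_om_closed) (use al that in auto)
    ultimately show ?thesis unfolding psi_def by (intro continuous_intros)
  qed
  have dpsi: "(psi has_real_derivative D x) (at x)" if x: "x \<in> {0<..<1}" for x
  proof -
    from x have x0: "0 < x" and x1: "x < 1" by auto
    have dA: "((\<lambda>x. x powr (al+2)) has_real_derivative (al+2) * x powr (al+2-1)) (at x)"
      using x0 by (rule deriv_powr_pos)
    have dB: "((\<lambda>x. (1-x) powr b) has_real_derivative - b * (1-x) powr (b-1)) (at x)"
      using x1 by (rule deriv_1m_powr)
    have e0: "al + 2 - 1 = al + 1" by simp
    have e1: "x powr (al+2) = x powr (al+1) * x" using x0 powr_succ[of x "al+1"] by (simp add: add.assoc)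
    have e3: "(1-x) powr b = (1-x) powr (b-1) * (1-x)" using x1 powr_succ_1m[of x "b-1"] by simp
    show ?thesis unfolding psi_def om2_def
      by (rule DERIV_cong[OF DERIV_diff[OF DERIV_cmult[OF dV[OF x]] DERIV_mult[OF dA dB]]])
        (simp only: D_def om_def e0 e1 e3, simp add: algebra_simps)
  qed
  have psi0: "psi 0 = 0" unfolding psi_def om2_def using V0 by simp
  have Dsign: "D x < 0 \<longleftrightarrow> (k-al-2)*(1-x) + b*x < 0" if x: "0 < x" "x < 1" for x
  proof -
    have P: "0 < x powr (al+1) * (1-x) powr (b-1)" using x by simp
    show ?thesis unfolding D_def using P by (simp add: mult_less_0_iff)
  qed
  have Dpos: "D x > 0 \<Longrightarrow> (k-al-2)*(1-x) + b*x > 0" if x: "0 < x" "x < 1" for x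
  proof -
    have P: "0 < x powr (al+1) * (1-x) powr (b-1)" using x by simp
    assume "D x > 0"
    then show ?thesis unfolding D_def using P by (simp add: zero_less_mult_iff)
  qed
  have Phi_nonneg: "Phi t \<ge> 0" if t: "t \<in> {0..1}" for t
  proof (rule ccontr)
    assume "\<not> Phi t \<ge> 0"
    then have neg: "Phi t < 0" by simp
    have t0: "0 < t" using t neg Phi0 by (cases "t = 0") auto
    have t1: "t < 1" using t neg Phi1 by (cases "t = 1") auto
    obtain z1 where z1: "0 < z1" "z1 < t" "Phi t - Phi 0 = (t - 0) * psi z1"
      using MVT_known[of 0 t Phi psi] t0 t1 continuous_on_subset[OF cPhi, of "{0..t}"] dPhi by auto
    have pz1: "psi z1 < 0"
    proof (rule ccontr)
      assume "\<not> psi z1 < 0"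
      then have "0 \<le> (t - 0) * psi z1" using t0 by simp
      then show False using z1(3) neg Phi0 by simp
    qed
    obtain z2 where z2: "t < z2" "z2 < 1" "Phi 1 - Phi t = (1 - t) * psi z2"
      using MVT_known[of t 1 Phi psi] t0 t1 continuous_on_subset[OF cPhi, of "{t..1}"] dPhi by auto
    have pz2: "psi z2 > 0"
    proof (rule ccontr)
      assume "\<not> psi z2 > 0"
      then have "(1 - t) * psi z2 \<le> 0" using t1 by (simp add: mult_nonneg_nonpos)
      then show False using z2(3) neg Phi1 by simp
    qed
    obtain xi where xi: "z1 < xi" "xi < z2" "psi z2 - psi z1 = (z2 - z1) * D xi"
      using MVT_known[of z1 z2 psi D] z1 z2 continuous_on_subset[OF cpsi[of z2], of "{z1..z2}"] dpsi by auto
    have Dxi: "D xi > 0"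
    proof (rule ccontr)
      assume "\<not> D xi > 0"
      then have "(z2 - z1) * D xi \<le> 0" using xi by (simp add: mult_nonneg_nonpos)
      then show False using xi(3) pz1 pz2 by simp
    qed
    obtain eta where eta: "0 < eta" "eta < z1" "psi z1 - psi 0 = (z1 - 0) * D eta"
      using MVT_known[of 0 z1 psi D] z1 z2 continuous_on_subset[OF cpsi[of z1], of "{0..z1}"] dpsi by auto
    have Deta: "D eta < 0"
    proof (rule ccontr)
      assume "\<not> D eta < 0"
      then have "0 \<le> (z1 - 0) * D eta" using z1 by simp
      then show False using eta(3) pz1 psi0 by simp
    qed
    have beta_eta: "(k-al-2)*(1-eta) + b*eta < 0" using Dsign[of eta] Deta eta z1 t1 by simp
    have beta_xi: "(k-al-2)*(1-xi) + b*xi > 0" using Dpos[of xi] Dxi xi z1 z2 by simp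
    have "(k-al-2)*(1-xi) + b*xi - ((k-al-2)*(1-eta) + b*eta) = (xi - eta) * (b - (k-al-2))"
      by (simp add: algebra_simps)
    moreover have "(xi - eta) * (b - (k-al-2)) < 0"
      using eta z1 xi b k_ge by (intro mult_pos_neg) auto
    ultimately show False using beta_eta beta_xi by simp
  qed
  define E where "E = (\<lambda>l. k * V l * h l - Phi l * h1 l)"
  define e' where "e' = (\<lambda>l. k * om l * h l + om2 l * h1 l - Phi l * h2 l)"
  have "(e' has_integral (E 1 - E 0)) {0..1}"
  proof (rule fundamental_theorem_of_calculus_interior)
    show "0 \<le> (1::real)" by simp
    show "continuous_on {0..1} E" unfolding E_def h_def h1_def
      using w by (intro continuous_intros cV cPhi cont_hpow) auto
    fix x :: real assume x: "x \<in> {0<..<1}"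
    then have x0: "0 < x" by auto
    have dh: "(h has_real_derivative h1 x) (at x)" unfolding h_def h1_def
      using deriv_h[of w x "-g"] w x0 by simp
    have dh1: "(h1 has_real_derivative h2 x) (at x)" unfolding h1_def h2_def
      using DERIV_cmult[OF deriv_h[of w x "-g-1"], of "-g*w"] w x0
      by (rule_tac DERIV_cong) (auto simp: algebra_simps power2_eq_square)
    have "(E has_real_derivative e' x) (at x)" unfolding E_def
      by (rule DERIV_cong[OF DERIV_diff[OF DERIV_mult[OF DERIV_cmult[OF dV[OF x]] dh] DERIV_mult[OF dPhi[OF x] dh1]]])
        (simp add: e'_def psi_def algebra_simps)
    then show "(E has_vector_derivative e' x) (at x)"
      by (simp add: has_real_derivative_iff_has_vector_derivative)
  qed
  moreover have "E 0 = 0" unfolding E_def using V0 Phi0 by simp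
  moreover have "E 1 = k * V 1 * h 1" unfolding E_def using Phi1 by simp
  ultimately have hE: "(e' has_integral (k * V 1 * h 1)) {0..1}" by simp
  define I1 where "I1 = integral {0..1} (\<lambda>l. l powr (al+1) * (1-l) powr b * (1+w*l) powr (-g))"
  define I2 where "I2 = integral {0..1} (\<lambda>l. l powr (al+2) * (1-l) powr b * (1+w*l) powr (-g-1))"
  define I3 where "I3 = integral {0..1} (\<lambda>l. Phi l * h2 l)"
  have i1: "(\<lambda>l. l powr (al+1) * (1-l) powr b * (1+w*l) powr (-g)) integrable_on {0..1}"
    by (rule integrable_wbeta) (use al b w in \<open>auto intro: cont_hpow\<close>)
  have i2: "(\<lambda>l. l powr (al+2) * (1-l) powr b * (1+w*l) powr (-g-1)) integrable_on {0..1}"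
    by (rule integrable_wbeta) (use al b w in \<open>auto intro: cont_hpow\<close>)
  have c3: "continuous_on {0..1} (\<lambda>l. Phi l * h2 l)" unfolding h2_def
    using w by (intro continuous_intros cPhi cont_hpow) auto
  have i3: "(\<lambda>l. Phi l * h2 l) integrable_on {0..1}"
    by (rule integrable_continuous_interval[OF c3])
  have I3: "I3 \<ge> 0" unfolding I3_def
  proof (rule integral_nonneg[OF i3])
    fix l :: real assume l: "l \<in> {0..1}"
    show "0 \<le> Phi l * h2 l" unfolding h2_def using Phi_nonneg[OF l] g by simp
  qed
  have "(e' has_integral (k * I1 + (-g*w) * I2 - I3)) {0..1}"
  proof -
    have "((\<lambda>l. k * (l powr (al+1) * (1-l) powr b * (1+w*l) powr (-g))
            + (-g*w) * (l powr (al+2) * (1-l) powr b * (1+w*l) powr (-g-1)) - Phi l * h2 l)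
          has_integral (k * I1 + (-g*w) * I2 - I3)) {0..1}"
      unfolding I1_def I2_def I3_def
      by (intro has_integral_diff has_integral_add has_integral_mult_right integrable_integral i1 i2 i3)
    then show ?thesis
      by (rule has_integral_eq[rotated]) (simp add: e'_def om_def om2_def h_def h1_def algebra_simps)
  qed
  from has_integral_unique[OF hE this] have eq: "k * V 1 * h 1 = k * I1 + (-g*w) * I2 - I3" .
  have "0 \<le> k * V 1 * h 1"
    unfolding h_def using V1 k_ge al by (intro mult_nonneg_nonneg) auto
  then have "g * w * I2 \<le> k * I1" using eq I3 by simp
  then show ?thesis unfolding I1_def I2_def k_def .
qed


lemma lint_eq_integral:
  fixes c b y d :: real
  assumes c: "c > -1" and b: "b > -1" "b \<le> 0" and y: "y \<ge> 0"
  shows "(LINT l:{0..1}|lborel. l powr c * (1 - l) powr b * (1 + y*l) powr d)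
       = integral {0..1} (\<lambda>l. l powr c * (1 - l) powr b * (1 + y*l) powr d)"
proof -
  let ?f = "\<lambda>l::real. l powr c * (1 - l) powr b * (1 + y*l) powr d"
  have i: "?f integrable_on {0..1}" by (rule integrable_wbeta[OF c b cont_hpow[OF y]])
  have "?f absolutely_integrable_on {0..1}"
    by (rule nonnegative_absolutely_integrable_1[OF i]) simp
  then have "integrable lebesgue (\<lambda>x. indicator {0..1} x *\<^sub>R ?f x)"
    by (simp add: set_integrable_def)
  moreover have "(\<lambda>x. indicator {0..1} x *\<^sub>R ?f x) \<in> borel_measurable lborel"
    by measurable
  ultimately have "integrable lborel (\<lambda>x. indicator {0..1} x *\<^sub>R ?f x)"
    using integrable_completion by blast
  then have "set_integrable lborel {0..1} ?f" by (simp add: set_integrable_def)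
  then show ?thesis by (rule set_borel_integral_eq_integral(2))
qed


theorem lemma3p6:
  fixes p n :: nat and a b e :: real
  assumes "p \<ge> 3" and "n \<ge> 1"
    and "e > - real p / 2 - real n / 2 - 1"
    and "- real p / 2 - 1 < a" and "a < real n / 2 + e"
    and "-1 < b" and "b < min (real n / 2 + e - a - 1) 0"
  shows "\<forall>w>0. \<exists>D. (phi_fun p n a b e has_real_derivative D) (at w) \<and>
           w * D / phi_fun p n a b e w \<ge> (real p / 2 + a + 2) * b / (b + 1)"
proof (intro allI impI)
  fix w :: real assume w: "w > 0"
  define al where "al = real p / 2 + a"
  define g where "g = real p / 2 + real n / 2 + e + 2"
  have al: "al > -1" using assms(4) by (simp add: al_def)
  have g: "g > 0" using assms(3) by (simp add: g_def)
  have b: "b > -1" "b < 0" "b \<le> 0" using assms(6,7) by auto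
  have dexp: "- real p / 2 - real n / 2 - e - 2 = -g" by (simp add: g_def)
  define M0 where "M0 = (\<lambda>y. integral {0..1} (\<lambda>l. l powr al * (1-l) powr b * (1+y*l) powr (-g)))"
  define M1 where "M1 = (\<lambda>y. integral {0..1} (\<lambda>l. l powr (al+1) * (1-l) powr b * (1+y*l) powr (-g)))"
  define N1 where "N1 = integral {0..1} (\<lambda>l. l powr (al+1) * (1-l) powr b * (1+w*l) powr (-g-1))"
  define N2 where "N2 = integral {0..1} (\<lambda>l. l powr (al+2) * (1-l) powr b * (1+w*l) powr (-g-1))"
  have phi_eq: "phi_fun p n a b e y = y * M1 y / M0 y" if y: "y > 0" for y
  proof -
    have L0: "(LINT l:{0..1}|lborel. l powr al * (1-l) powr b * (1+y*l) powr (-g)) = M0 y"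
      using lint_eq_integral[of al b y "-g"] al b y unfolding M0_def by simp
    have L1: "(LINT l:{0..1}|lborel. l powr (al+1) * (1-l) powr b * (1+y*l) powr (-g)) = M1 y"
      using lint_eq_integral[of "al+1" b y "-g"] al b y unfolding M1_def by simp
    show ?thesis unfolding phi_fun_def dexp using L0[unfolded al_def] L1[unfolded al_def] by simp
  qed
  have iN1: "(\<lambda>l. l powr (al+1) * (1-l) powr b * (1+w*l) powr (-g-1)) integrable_on {0..1}"
    by (rule integrable_wbeta) (use al b w in \<open>auto intro: cont_hpow\<close>)
  have iN2: "(\<lambda>l. l powr (al+2) * (1-l) powr b * (1+w*l) powr (-g-1)) integrable_on {0..1}"
    by (rule integrable_wbeta) (use al b w in \<open>auto intro: cont_hpow\<close>)
  have dM0: "(M0 has_real_derivative (-g * N1)) (at w)"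
  proof -
    have "integral {0..1} (\<lambda>l. l powr al * (1-l) powr b * (-g * l * (1+w*l) powr (-g-1)))
        = integral {0..1} (\<lambda>l. -g * (l powr (al+1) * (1-l) powr b * (1+w*l) powr (-g-1)))"
    proof (rule integral_cong)
      fix l :: real assume l: "l \<in> {0..1}"
      have "l powr (al+1) = l powr al * l" using l powr_succ[of l al] by simp
      then show "l powr al * (1-l) powr b * (-g * l * (1+w*l) powr (-g-1))
          = -g * (l powr (al+1) * (1-l) powr b * (1+w*l) powr (-g-1))" by (simp add: algebra_simps)
    qed
    also have "\<dots> = -g * N1" unfolding N1_def using iN1 by simp
    finally show ?thesis
      using deriv_M[of al b g w] al b g w unfolding M0_def by simp
  qed
  have dM1: "(M1 has_real_derivative (-g * N2)) (at w)"
  proof -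
    have "integral {0..1} (\<lambda>l. l powr (al+1) * (1-l) powr b * (-g * l * (1+w*l) powr (-g-1)))
        = integral {0..1} (\<lambda>l. -g * (l powr (al+2) * (1-l) powr b * (1+w*l) powr (-g-1)))"
    proof (rule integral_cong)
      fix l :: real assume l: "l \<in> {0..1}"
      have "l powr (al+2) = l powr (al+1) * l" using l powr_succ[of l "al+1"] by (simp add: add.assoc)
      then show "l powr (al+1) * (1-l) powr b * (-g * l * (1+w*l) powr (-g-1))
          = -g * (l powr (al+2) * (1-l) powr b * (1+w*l) powr (-g-1))" by (simp add: algebra_simps)
    qed
    also have "\<dots> = -g * N2" unfolding N2_def using iN2 by simp
    finally show ?thesis
      using deriv_M[of "al+1" b g w] al b g w unfolding M1_def by simp
  qed
  define X where "X = M0 w"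
  define Y where "Y = M1 w"
  have iM0: "(\<lambda>l. l powr al * (1-l) powr b * (1+w*l) powr (-g)) integrable_on {0..1}"
    by (rule integrable_wbeta) (use al b w in \<open>auto intro: cont_hpow\<close>)
  have iM1: "(\<lambda>l. l powr (al+1) * (1-l) powr b * (1+w*l) powr (-g)) integrable_on {0..1}"
    by (rule integrable_wbeta) (use al b w in \<open>auto intro: cont_hpow\<close>)
  have YleX: "Y \<le> X" unfolding X_def Y_def M0_def M1_def
  proof (rule integral_le[OF iM1 iM0])
    fix l :: real assume l: "l \<in> {0..1}"
    have e: "l powr (al+1) = l powr al * l" using l powr_succ[of l al] by simp
    have "l powr al * l \<le> l powr al * 1" using l by (intro mult_left_mono) auto
    then have "l powr (al+1) \<le> l powr al" using e by simp
    then show "l powr (al+1) * (1-l) powr b * (1+w*l) powr (-g) \<le> l powr al * (1-l) powr b * (1+w*l) powr (-g)"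
      by (intro mult_right_mono) auto
  qed
  have Ypos: "Y > 0"
  proof -
    define c0 where "c0 = (1+w) powr (-g)"
    have c0: "c0 > 0" unfolding c0_def using w by simp
    have h1: "((\<lambda>l. l powr (al+1)) has_integral (1 powr (al+1+1) / (al+1+1))) {0..1}"
      using has_integral_powr_from_0[of "al+1" 1] al by simp
    have h2: "((\<lambda>l. l powr (al+2)) has_integral (1 powr (al+2+1) / (al+2+1))) {0..1}"
      using has_integral_powr_from_0[of "al+2" 1] al by simp
    have "((\<lambda>l. c0 * (l powr (al+1) - l powr (al+2))) has_integral (c0 * (1/(al+2) - 1/(al+3)))) {0..1}"
      using has_integral_mult_right[OF has_integral_diff[OF h1 h2], of c0] by (simp add: add.assoc)
    moreover have "((\<lambda>l. l powr (al+1) * (1-l) powr b * (1+w*l) powr (-g)) has_integral Y) {0..1}"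
      unfolding Y_def M1_def using iM1 by (simp add: has_integral_integral)
    moreover have "c0 * (l powr (al+1) - l powr (al+2)) \<le> l powr (al+1) * (1-l) powr b * (1+w*l) powr (-g)"
      if l: "l \<in> {0..1}" for l
    proof -
      have e: "l powr (al+2) = l powr (al+1) * l" using l powr_succ[of l "al+1"] by (simp add: add.assoc)
      have A: "1 - l \<le> (1-l) powr b"
      proof (cases "l = 1")
        case True then show ?thesis by simp
      next
        case False
        then have "0 < 1 - l" using l by simp
        then have "1 powr b \<le> (1-l) powr b" using l b by (intro powr_mono2') auto
        then show ?thesis using l by simp
      qed
      have B: "c0 \<le> (1+w*l) powr (-g)" unfolding c0_def
        using w l g by (intro powr_mono2') (auto intro: one_plus_pos mult_left_le_one_le)
      have "c0 * (l powr (al+1) - l powr (al+2)) = l powr (al+1) * (1-l) * c0" using e by (simp add: algebra_simps)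
      also have "\<dots> \<le> l powr (al+1) * (1-l) powr b * (1+w*l) powr (-g)"
        using A B l c0 by (intro mult_mono mult_left_mono) auto
      finally show ?thesis .
    qed
    ultimately have "c0 * (1/(al+2) - 1/(al+3)) \<le> Y" by (rule has_integral_le)
    moreover have "0 < c0 * (1/(al+2) - 1/(al+3))"
    proof -
      have "1/(al+3) < 1/(al+2)" using al by (intro divide_strict_left_mono) auto
      then show ?thesis using c0 by (intro mult_pos_pos) auto
    qed
    ultimately show ?thesis by simp
  qed
  have Xpos: "X > 0" using Ypos YleX by simp
  define Dv where "Dv = ((1 * M1 w + (-g * N2) * w) * M0 w - (-g * N1) * (w * M1 w)) / (M0 w ^ Suc (Suc 0))"
  have "((\<lambda>y. y * M1 y / M0 y) has_real_derivative Dv) (at w)"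
    unfolding Dv_def
    by (rule DERIV_quotient[OF DERIV_mult[OF DERIV_ident dM1] dM0]) (use Xpos X_def in simp)
  then have dphi: "(phi_fun p n a b e has_real_derivative Dv) (at w)"
    by (rule has_field_derivative_transform_within_open[of _ _ _ "{0<..}"]) (use w phi_eq in auto)
  have ident': "g * w * N1 = (al+1) * X - (al+b+2) * Y + g * w * N2"
    using ident[of al b g w] al b g w unfolding N1_def N2_def X_def Y_def M0_def M1_def by simp
  have main': "g * w * N2 \<le> ((al+2)/(b+1)) * Y"
    using main_lemma[of al b g w] al b g w unfolding N2_def Y_def M1_def by simp
  show "\<exists>D. (phi_fun p n a b e has_real_derivative D) (at w) \<and>
           w * D / phi_fun p n a b e w \<ge> (real p / 2 + a + 2) * b / (b + 1)"
  proof (intro exI conjI)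
    show "(phi_fun p n a b e has_real_derivative Dv) (at w)" by (rule dphi)
    define k where "k = (al+2)/(b+1)"
    define T where "T = g * w * N2"
    define S where "S = g * w * N1"
    have k_ge: "k \<ge> al + 2"
    proof -
      have "(al+2) * 1 \<le> (al+2) * (1/(b+1))"
        using al b by (intro mult_left_mono) (auto simp: field_simps)
      then show ?thesis unfolding k_def by simp
    qed
    have c_eq: "(real p / 2 + a + 2) * b / (b + 1) = (al + 2) - k"
      unfolding k_def al_def using b by (simp add: field_simps)
    have eqD: "w * Dv / phi_fun p n a b e w = ((Y - T) * X + S * Y) / (X * Y)"
      unfolding phi_eq[OF w] Dv_def T_def S_def X_def[symmetric] Y_def[symmetric]
      using w Xpos Ypos by (simp add: field_simps power2_eq_square)
    have Tle: "T \<le> k * Y" using main' unfolding T_def k_def .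
    have Seq: "S = (al+1) * X - (al+b+2) * Y + T" using ident' unfolding S_def T_def .
    have "T * (X - Y) \<le> k * Y * (X - Y)" using Tle YleX by (intro mult_right_mono) auto
    moreover have "0 \<le> (k - al - b - 2) * Y * Y" using k_ge b Ypos by simp
    ultimately have "((al + 2) - k) * (X * Y) \<le> (Y - T) * X + S * Y"
      unfolding Seq by (simp add: algebra_simps)
    then have "(al + 2) - k \<le> ((Y - T) * X + S * Y) / (X * Y)"
      using Xpos Ypos by (simp add: le_divide_eq)
    then show "w * Dv / phi_fun p n a b e w \<ge> (real p / 2 + a + 2) * b / (b + 1)"
      unfolding eqD c_eq .
  qed
qed

end
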